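(* Let $k\colon\mathbb{R}\setminus\{0\}\to[0,\infty)$ satisfy: (a) $k$ is $C^2$ on $\mathbb{R}\setminus\{0\}$ and $(1+t^2)^m k^{(n)}(t)$ is bounded for all $m,n\in\{0,1,2\}$; (b) $k$ is increasing on $(-\infty,0)$ and decreasing on $(0,\infty)$; (c) $k$ is strictly positive on $\mathbb{R}\setminus\{0\}$. Then for every $x\in\mathbb{R}$, $G_{\nu_k}(z)\to\frac{1}{x+\mathrm{i}v_k(x)}$ as $z\to P_k(x)$ non-tangentially from $\mathbb{C}^+$.
   Context: Notation: $\tilde{k}(t)=\mathrm{sign}(t)k(t)$; $H_k(z)=z+z\int_{\mathbb{R}}\frac{\tilde{k}(t)}{z-t}\mathrm{d}t$ ($z\in\mathbb{C}^+$); $F_k(x+\mathrm{i}y)=\int_{\mathbb{R}}\frac{|t|k(t)}{(x-t)^2+y^2}\mathrm{d}t$ ($x\in\mathbb{R}$, $y>0$); $v_k(x)$ is the unique $y\in(0,\infty)$ with $F_k(x+\mathrm{i}y)=1$ (it exists and is unique under (a)-(c)); $P_k(x)=H_k(x+\mathrm{i}v_k(x))$, which is a real number. $\nu_k$ is the $\boxplus$-infinitely divisible probability measure with free characteristic triplet $(0,\frac{k(t)}{|t|}\mathrm{d}t,\int_{-1}^1\tilde{k}(t)\mathrm{d}t)$, i.e. the unique probability measure $\mu$ on $\mathbb{R}$ whose free cumulant transform $\mathcal{C}_\mu(w)=wG_\mu^{\langle-1\rangle}(w)-1$ (defined for $w\in\mathbb{C}^-$ with $1/w$ in a truncated cone $\{z\in\mathbb{C}^+:|\mathrm{Re}z|<\eta\mathrm{Im}z,\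 \mathrm{Im}z>M\}$) equals $\eta w+\int_{\mathbb{R}}\big(\frac{1}{1-tw}-1-tw1_{[-1,1]}(t)\big)\rho(\mathrm{d}t)$ with $\eta=\int_{-1}^1\tilde{k}$, $\rho(\mathrm{d}t)=\frac{k(t)}{|t|}\mathrm{d}t$. $G_\mu(z)=\int\frac{\mu(\mathrm{d}t)}{z-t}$ is the Cauchy transform. "$z\to\xi$ non-tangentially from $\mathbb{C}^+$" means $z\to\xi$ with $z-\xi\in\{r e^{\mathrm{i}\theta}:\delta<\theta<\pi-\delta,\ r>0\}$, for every fixed $\delta\in(0,\pi)$. *)

theory Defs
  imports "HOL-Probability.Probability"
begin

text \<open>Standing hypotheses (a)-(c) on the kernel k, defined on R minus 0
  (the value of k at 0 is irrelevant and never used).\<close>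

definition kernel_hyps :: "(real \<Rightarrow> real) \<Rightarrow> bool" where
  "kernel_hyps k \<longleftrightarrow>
     \<comment> \<open>(a) C^2 on R minus 0\<close>
     (\<forall>t. t \<noteq> 0 \<longrightarrow> k differentiable (at t) \<and> (deriv k) differentiable (at t)
                        \<and> isCont (deriv (deriv k)) t) \<and>
     \<comment> \<open>(a) (1+t^2)^m k^(n)(t) bounded for m,n in {0,1,2}\<close>
     (\<forall>m::nat. \<forall>n::nat. m \<le> 2 \<longrightarrow> n \<le> 2 \<longrightarrow>
        (\<exists>B. \<forall>t. t \<noteq> 0 \<longrightarrow> \<bar>(1 + t\<^sup>2) ^ m * (deriv ^^ n) k t\<bar> \<le> B)) \<and>
     \<comment> \<open>(b) increasing on (-inf,0), decreasing on (0,inf)\<close>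
     monotone_on {..<0} (\<le>) (\<le>) k \<and>
     monotone_on {0<..} (\<le>) (\<ge>) k \<and>
     \<comment> \<open>(c) strictly positive on R minus 0 (so k maps into [0,inf))\<close>
     (\<forall>t. t \<noteq> 0 \<longrightarrow> k t > 0)"

definition H_k :: "(real \<Rightarrow> real) \<Rightarrow> complex \<Rightarrow> complex" where
  "H_k k z = z + z * (LINT t|lborel. complex_of_real (sgn t * k t) / (z - complex_of_real t))"

definition F_k :: "(real \<Rightarrow> real) \<Rightarrow> real \<Rightarrow> real \<Rightarrow> real" where
  "F_k k x y = (LINT t|lborel. \<bar>t\<bar> * k t / ((x - t)\<^sup>2 + y\<^sup>2))"

definition v_k :: "(real \<Rightarrow> real) \<Rightarrow> real \<Rightarrow> real" where
  "v_k k x = (THE y. y > 0 \<and> F_k k x y = 1)"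

definition P_k :: "(real \<Rightarrow> real) \<Rightarrow> real \<Rightarrow> complex" where
  "P_k k x = H_k k (Complex x (v_k k x))"

definition cauchy_transform :: "real measure \<Rightarrow> complex \<Rightarrow> complex" where
  "cauchy_transform \<mu> z = (LINT t|\<mu>. 1 / (z - complex_of_real t))"

definition trunc_cone :: "real \<Rightarrow> real \<Rightarrow> complex set" where
  "trunc_cone a M = {z. \<bar>Re z\<bar> < a * Im z \<and> Im z > M}"

text \<open>Free cumulant transform with drift eta and Levy measure rho(dt) = k(t)/|t| dt\<close>
definition free_cumulant_formula :: "(real \<Rightarrow> real) \<Rightarrow> complex \<Rightarrow> complex" where
  "free_cumulant_formula k w =
     complex_of_real (LINT t:{-1..1}|lborel. sgn t * k t) * w
     + (LINT t|lborel. (1 / (1 - complex_of_real t * w) - 1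
                         - complex_of_real t * w * complex_of_real (indicator {-1..1} t))
                        * complex_of_real (k t / \<bar>t\<bar>))"

text \<open>mu is the free infinitely divisible law with free characteristic triplet
  (0, k(t)/|t| dt, int_{-1}^{1} sign(t) k(t) dt): mu is a Borel probability measure
  on R, G_mu is univalent on some truncated cone, and its inverse Ginv (taking values
  in that cone) is defined on {w : 1/w in a truncated cone} and satisfies
  w Ginv(w) - 1 = free_cumulant_formula k w there.\<close>
definition is_nu_k :: "(real \<Rightarrow> real) \<Rightarrow> real measure \<Rightarrow> bool" where
  "is_nu_k k \<mu> \<longleftrightarrow> prob_space \<mu> \<and> sets \<mu> = sets borel \<and>
     (\<exists>\<alpha> \<beta> \<eta> M Ginv. \<alpha> > 0 \<and> \<beta> > 0 \<and> \<eta> > 0 \<and> M > 0 \<and>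
        inj_on (cauchy_transform \<mu>) (trunc_cone \<alpha> \<beta>) \<and>
        (\<forall>w. w \<noteq> 0 \<and> 1 / w \<in> trunc_cone \<eta> M \<longrightarrow>
           Ginv w \<in> trunc_cone \<alpha> \<beta> \<and> cauchy_transform \<mu> (Ginv w) = w \<and>
           w * Ginv w - 1 = free_cumulant_formula k w))"

text \<open>Non-tangential approach region at xi with aperture parameter delta\<close>
definition nt_sector :: "complex \<Rightarrow> real \<Rightarrow> complex set" where
  "nt_sector \<xi> \<delta> = {\<xi> + complex_of_real r * cis \<theta> | r \<theta>. r > 0 \<and> \<delta> < \<theta> \<and> \<theta> < pi - \<delta>}"

end

theory Submission
  imports Defs "HOL-Complex_Analysis.Complex_Analysis"
begin

lemma norm_sub_real_ge: "Im z \<le> norm (z - complex_of_real t)"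
  using abs_Im_le_cmod[of "z - complex_of_real t"] by simp

lemma cint_integrable:
  fixes M :: "real measure" and g :: "real \<Rightarrow> real"
  assumes g: "integrable M g" and sM: "sets M = sets borel" and z: "Im z > 0"
  shows "integrable M (\<lambda>t. complex_of_real (g t) / (z - complex_of_real t))"
proof -
  have i1: "integrable M (\<lambda>t. g t / Im z)" using g by simp
  have gm: "g \<in> borel_measurable M" using g by auto
  have "(\<lambda>t::real. t) \<in> borel_measurable M" using sM measurable_cong_sets by fastforce
  then have m: "(\<lambda>t. complex_of_real (g t) / (z - complex_of_real t)) \<in> borel_measurable M"
    using gm by measurable
  have "AE t in M. norm (complex_of_real (g t) / (z - complex_of_real t)) \<le> norm (g t / Im z)"
  proof (rule AE_I2)
    fix t
    have "norm (complex_of_real (g t) / (z - complex_of_real t)) = \<bar>g t\<bar> / norm (z - t)"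
      by (simp add: norm_divide)
    also have "\<dots> \<le> \<bar>g t\<bar> / Im z"
      using z norm_sub_real_ge[of z t] by (intro divide_left_mono) (auto intro!: mult_pos_pos)
    finally show "norm (complex_of_real (g t) / (z - complex_of_real t)) \<le> norm (g t / Im z)"
      using z by simp
  qed
  then show ?thesis using Bochner_Integration.integrable_bound[OF i1 m] by blast
qed

lemma int_bound_weight:
  fixes M :: "real measure" and g :: "real \<Rightarrow> real" and f :: "real \<Rightarrow> complex"
  assumes g: "integrable M g" and m: "f \<in> borel_measurable M"
    and b: "\<And>t. norm (f t) \<le> \<bar>g t\<bar> * C"
  shows "integrable M f"
proof -
  have i1: "integrable M (\<lambda>t. g t * C)" using g by simp
  have "AE t in M. norm (f t) \<le> norm (g t * C)"
    using b by (intro AE_I2) (metis abs_ge_zero abs_mult abs_of_nonneg norm_ge_zero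
        order_trans real_norm_def mult_right_mono abs_ge_self)
  then show ?thesis using Bochner_Integration.integrable_bound[OF i1 m] by blast
qed

lemma alg_aux:
  fixes A B G :: complex
  assumes "A \<noteq> 0" "B \<noteq> 0" "A - B \<noteq> 0"
  shows "(G / A - G / B) / (A - B) - (- G / B^2) = G * (A - B) / (A * B^2)"
  using assms by (simp add: field_simps power2_eq_square)

lemma cint_holo:
  fixes M :: "real measure" and g :: "real \<Rightarrow> real"
  assumes g: "integrable M g" and sM: "sets M = sets borel"
  shows "(\<lambda>z. LINT t|M. complex_of_real (g t) / (z - complex_of_real t)) holomorphic_on {z. Im z > 0}"
proof -
  define \<Phi> where "\<Phi> = (\<lambda>z. LINT t|M. complex_of_real (g t) / (z - complex_of_real t))"
  have gm: "g \<in> borel_measurable M" using g by auto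
  have idm: "(\<lambda>t::real. t) \<in> borel_measurable M" using sM measurable_cong_sets by fastforce
  have "(\<Phi> has_field_derivative (LINT t|M. - complex_of_real (g t) / (z - complex_of_real t)^2)) (at z)"
    if z: "Im z > 0" for z
  proof -
    define b where "b = Im z"
    have b: "b > 0" using z b_def by simp
    define D where "D = (LINT t|M. - complex_of_real (g t) / (z - complex_of_real t)^2)"
    have nz: "norm (z - complex_of_real t) \<ge> b" for t using norm_sub_real_ge[of z t] b_def by simp
    have iD: "integrable M (\<lambda>t. - complex_of_real (g t) / (z - complex_of_real t)^2)"
    proof (rule int_bound_weight[OF g, where C="1/b^2"])
      show "(\<lambda>t. - complex_of_real (g t) / (z - complex_of_real t)^2) \<in> borel_measurable M"
        using gm idm by measurable
      fix t
      have "norm (- complex_of_real (g t) / (z - complex_of_real t)^2) = \<bar>g t\<bar> / norm (z - t)^2"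
        by (simp add: norm_divide norm_power)
      also have "\<dots> \<le> \<bar>g t\<bar> / b^2"
        using b nz[of t] by (intro divide_left_mono power_mono) (auto intro!: mult_pos_pos)
      finally show "norm (- complex_of_real (g t) / (z - complex_of_real t)^2) \<le> \<bar>g t\<bar> * (1/b^2)"
        by simp
    qed
    have key: "norm ((\<Phi> w - \<Phi> z) / (w - z) - D) \<le> norm (w - z) * (2 / b^3 * (LINT t|M. \<bar>g t\<bar>))"
      if w: "w \<noteq> z" "norm (w - z) < b / 2" for w
    proof -
      have Imw: "Im w > b / 2"
        using w(2) abs_Im_le_cmod[of "w - z"] b_def by auto
      have nw: "norm (w - complex_of_real t) > b / 2" for t
        using norm_sub_real_ge[of w t] Imw by simp
      have iw: "integrable M (\<lambda>t. complex_of_real (g t) / (w - complex_of_real t))"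
        using cint_integrable[OF g sM] Imw b by simp
      have iz: "integrable M (\<lambda>t. complex_of_real (g t) / (z - complex_of_real t))"
        using cint_integrable[OF g sM] z by simp
      define R where "R = (\<lambda>t. complex_of_real (g t) * (w - z) / ((w - complex_of_real t) * (z - complex_of_real t)^2))"
      have pt: "(complex_of_real (g t) / (w - complex_of_real t) - complex_of_real (g t) / (z - complex_of_real t)) / (w - z)
              - (- complex_of_real (g t) / (z - complex_of_real t)^2) = R t" for t
      proof -
        have a: "w - complex_of_real t \<noteq> 0" using nw[of t] b by auto
        have c: "z - complex_of_real t \<noteq> 0" using nz[of t] b by auto
        have d: "w - z \<noteq> 0" using w by simp
        have "w - z = (w - complex_of_real t) - (z - complex_of_real t)" by simp
        then show ?thesis unfolding R_def using alg_aux[OF a c, of "complex_of_real (g t)"] d by simp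
      qed
      have eqR: "(\<Phi> w - \<Phi> z) / (w - z) - D = (LINT t|M. R t)"
      proof -
        have "(\<Phi> w - \<Phi> z) / (w - z) - D = (LINT t|M. (complex_of_real (g t) / (w - complex_of_real t) - complex_of_real (g t) / (z - complex_of_real t)) / (w - z)
              - (- complex_of_real (g t) / (z - complex_of_real t)^2))"
          unfolding \<Phi>_def D_def
          using iw iz iD by (simp add: integral_diff)
        also have "\<dots> = (LINT t|M. R t)" using pt by simp
        finally show ?thesis .
      qed
      moreover have bndR: "norm (LINT t|M. R t) \<le> (LINT t|M. \<bar>g t\<bar> * (norm (w - z) * 2 / b^3))"
      proof (rule Bochner_Integration.integral_norm_bound_integral)
        show "integrable M (\<lambda>t. \<bar>g t\<bar> * (norm (w - z) * 2 / b^3))" using g by simp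
        have bnd: "norm (R t) \<le> \<bar>g t\<bar> * (norm (w - z) * 2 / b^3)" for t
        proof -
          have "norm (R t) = \<bar>g t\<bar> * norm (w - z) / (norm (w - complex_of_real t) * norm (z - complex_of_real t)^2)"
            unfolding R_def by (simp add: norm_divide norm_mult norm_power)
          also have "\<dots> \<le> \<bar>g t\<bar> * norm (w - z) / ((b/2) * b^2)"
            using nw[of t] nz[of t] b
            by (intro divide_left_mono mult_mono power_mono) (auto intro!: mult_pos_pos)
          also have "\<dots> = \<bar>g t\<bar> * (norm (w - z) * 2 / b^3)"
            using b by (simp add: field_simps power3_eq_cube power2_eq_square)
          finally show ?thesis .
        qed
        show "integrable M R"
        proof (rule int_bound_weight[OF g, where C="norm (w - z) * 2 / b^3"])
          show "R \<in> borel_measurable M" unfolding R_def using gm idm by measurable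
        qed (rule bnd)
        show "\<And>t. t \<in> space M \<Longrightarrow> norm (R t) \<le> \<bar>g t\<bar> * (norm (w - z) * 2 / b^3)" using bnd by blast
      qed
      moreover have e1: "(LINT t|M. \<bar>g t\<bar> * (norm (w - z) * 2 / b^3)) = (LINT t|M. \<bar>g t\<bar>) * (norm (w - z) * 2 / b^3)"
        by (rule integral_mult_left_zero)
      moreover have e2: "(LINT t|M. \<bar>g t\<bar>) * (norm (w - z) * 2 / b^3) = norm (w - z) * (2 / b^3 * (LINT t|M. \<bar>g t\<bar>))"
        by (simp add: field_simps)
      have "norm (LINT t|M. R t) \<le> norm (w - z) * (2 / b^3 * (LINT t|M. \<bar>g t\<bar>))"
        using bndR unfolding e1 e2 .
      then show ?thesis unfolding eqR .
    qed
    have "((\<lambda>w. (\<Phi> w - \<Phi> z) / (w - z) - D) \<longlongrightarrow> 0) (at z)"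
    proof (rule Lim_null_comparison)
      show "eventually (\<lambda>w. norm ((\<Phi> w - \<Phi> z) / (w - z) - D) \<le> norm (w - z) * (2 / b^3 * (LINT t|M. \<bar>g t\<bar>))) (at z)"
        unfolding eventually_at using b key by (intro exI[of _ "b/2"]) (auto simp: dist_norm)
      have "((\<lambda>w. norm (w - z) * (2 / b^3 * (LINT t|M. \<bar>g t\<bar>))) \<longlongrightarrow> norm (z - z) * (2 / b^3 * (LINT t|M. \<bar>g t\<bar>))) (at z)"
        by (intro tendsto_intros)
      then show "((\<lambda>w. norm (w - z) * (2 / b^3 * (LINT t|M. \<bar>g t\<bar>))) \<longlongrightarrow> 0) (at z)" by simp
    qed
    then have "((\<lambda>w. (\<Phi> w - \<Phi> z) / (w - z)) \<longlongrightarrow> D) (at z)"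
      by (rule LIM_zero_cancel)
    then show ?thesis unfolding D_def has_field_derivative_iff .
  qed
  then show ?thesis unfolding \<Phi>_def[symmetric]
    by (auto simp: holomorphic_on_def field_differentiable_def intro: has_field_derivative_at_within)
qed

lemma integrable_inv_sq: "integrable lborel (\<lambda>t::real. 1 / (1 + t^2))"
proof -
  have "set_integrable lborel (einterval (-\<infinity>) \<infinity>) (\<lambda>x::real. inverse (1 + x^2))"
    by (rule integrable_inverse_1_plus_square)
  then show ?thesis by (simp add: set_integrable_def einterval_def inverse_eq_divide)
qed

lemma kernel_facts:
  assumes "kernel_hyps k"
  shows "\<And>t. t \<noteq> 0 \<Longrightarrow> k t > 0"
    and "\<And>t. t \<noteq> 0 \<Longrightarrow> isCont k t"
    and "\<exists>B. \<forall>t. t \<noteq> 0 \<longrightarrow> (1 + t^2) * k t \<le> B"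
    and "\<exists>B. \<forall>t. t \<noteq> 0 \<longrightarrow> (1 + t^2)^2 * k t \<le> B"
    and "\<And>s t. s < 0 \<Longrightarrow> t < 0 \<Longrightarrow> s \<le> t \<Longrightarrow> k s \<le> k t"
    and "\<And>s t. 0 < s \<Longrightarrow> 0 < t \<Longrightarrow> s \<le> t \<Longrightarrow> k t \<le> k s"
proof -
  have h1: "\<forall>t. t \<noteq> 0 \<longrightarrow> k differentiable (at t) \<and> (deriv k) differentiable (at t)
                        \<and> isCont (deriv (deriv k)) t"
   and h2: "\<forall>m::nat. \<forall>n::nat. m \<le> 2 \<longrightarrow> n \<le> 2 \<longrightarrow>
        (\<exists>B. \<forall>t. t \<noteq> 0 \<longrightarrow> \<bar>(1 + t\<^sup>2) ^ m * (deriv ^^ n) k t\<bar> \<le> B)"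
   and h3: "monotone_on {..<0} (\<le>) (\<le>) k"
   and h4: "monotone_on {0<..} (\<le>) (\<ge>) k"
   and h5: "\<forall>t. t \<noteq> 0 \<longrightarrow> k t > 0"
    using assms unfolding kernel_hyps_def by blast+
  show "\<And>t. t \<noteq> 0 \<Longrightarrow> k t > 0" using h5 by blast
  show "\<And>t. t \<noteq> 0 \<Longrightarrow> isCont k t"
  proof -
    fix t :: real assume "t \<noteq> 0"
    then have "k differentiable (at t)" using h1 by blast
    then show "isCont k t" by (rule differentiable_imp_continuous_within)
  qed
  obtain B where B: "\<forall>t. t \<noteq> 0 \<longrightarrow> \<bar>(1 + t\<^sup>2) ^ 1 * (deriv ^^ 0) k t\<bar> \<le> B"
    using h2[rule_format, of 1 0] by auto
  then show "\<exists>B. \<forall>t. t \<noteq> 0 \<longrightarrow> (1 + t^2) * k t \<le> B" by (intro exI[of _ B]) auto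
  obtain B2 where B2: "\<forall>t. t \<noteq> 0 \<longrightarrow> \<bar>(1 + t\<^sup>2) ^ 2 * (deriv ^^ 0) k t\<bar> \<le> B2"
    using h2[rule_format, of 2 0] by auto
  then show "\<exists>B. \<forall>t. t \<noteq> 0 \<longrightarrow> (1 + t^2)^2 * k t \<le> B" by (intro exI[of _ B2]) auto
  show "\<And>s t. s < 0 \<Longrightarrow> t < 0 \<Longrightarrow> s \<le> t \<Longrightarrow> k s \<le> k t"
    using h3 unfolding monotone_on_def by auto
  show "\<And>s t. 0 < s \<Longrightarrow> 0 < t \<Longrightarrow> s \<le> t \<Longrightarrow> k t \<le> k s"
    using h4 unfolding monotone_on_def by auto
qed

lemma kernel_meas:
  assumes "kernel_hyps k"
  shows "k \<in> borel_measurable borel"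
proof (rule borel_measurable_continuous_countable_exceptions[of "{0}"])
  show "continuous_on (- {0}) k"
    using kernel_facts(2)[OF assms] by (intro continuous_at_imp_continuous_on) auto
qed auto

lemma kernel_integrable:
  assumes kh: "kernel_hyps k"
  shows "integrable lborel k" "integrable lborel (\<lambda>t. sgn t * k t)"
    "integrable lborel (\<lambda>t. \<bar>t\<bar> * k t)"
proof -
  have km: "k \<in> borel_measurable lborel" using kernel_meas[OF kh] by simp
  obtain B where B: "\<forall>t. t \<noteq> 0 \<longrightarrow> (1 + t^2) * k t \<le> B" using kernel_facts(3)[OF kh] by blast
  obtain B2 where B2: "\<forall>t. t \<noteq> 0 \<longrightarrow> (1 + t^2)^2 * k t \<le> B2" using kernel_facts(4)[OF kh] by blast
  have kp: "t \<noteq> 0 \<Longrightarrow> k t > 0" for t using kernel_facts(1)[OF kh] by blast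
  have i1: "integrable lborel (\<lambda>t::real. \<bar>B\<bar> * (1 / (1 + t^2)))" using integrable_mult_right[OF integrable_inv_sq, of "\<bar>B\<bar>"] .
  have i2: "integrable lborel (\<lambda>t::real. \<bar>B2\<bar> * (1 / (1 + t^2)))" using integrable_mult_right[OF integrable_inv_sq, of "\<bar>B2\<bar>"] .
  have pos: "(1 + t^2) > (0::real)" for t by (simp add: add_pos_nonneg)
  have bk: "\<bar>k t\<bar> \<le> \<bar>B\<bar> * (1 / (1 + t^2))" if "t \<noteq> 0" for t
  proof -
    have "(1 + t^2) * k t \<le> B" using B that by blast
    then have "k t \<le> B / (1 + t^2)" using pos[of t] by (simp add: field_simps)
    also have "\<dots> \<le> \<bar>B\<bar> / (1 + t^2)" using pos[of t] by (intro divide_right_mono) auto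
    finally show ?thesis using kp[OF that] by simp
  qed
  have bk2: "\<bar>\<bar>t\<bar> * k t\<bar> \<le> \<bar>B2\<bar> * (1 / (1 + t^2))" if "t \<noteq> 0" for t
  proof -
    have "(1 + t^2)^2 * k t \<le> B2" using B2 that by blast
    moreover have "\<bar>t\<bar> * (1 + t^2) \<le> (1 + t^2)^2"
    proof -
      have "\<bar>t\<bar> \<le> 1 + t^2"
      proof -
        have "0 \<le> (\<bar>t\<bar> - 1/2)^2" by simp
        moreover have "(\<bar>t\<bar> - 1/2)^2 = t^2 - \<bar>t\<bar> + 1/4" by (simp add: power2_eq_square field_simps)
        ultimately show ?thesis by linarith
      qed
      then show ?thesis using pos[of t] by (simp add: power2_eq_square mult_right_mono)
    qed
    ultimately have "\<bar>t\<bar> * (1 + t^2) * k t \<le> B2"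
      using kp[OF that] by (smt (verit) mult_right_mono)
    then have "\<bar>t\<bar> * k t \<le> B2 / (1 + t^2)" using pos[of t] by (simp add: field_simps)
    also have "\<dots> \<le> \<bar>B2\<bar> / (1 + t^2)" using pos[of t] by (intro divide_right_mono) auto
    finally show ?thesis using kp[OF that] by simp
  qed
  have ae: "AE t in lborel. t \<noteq> (0::real)" by (rule AE_lborel_singleton)
  show "integrable lborel k"
    by (rule Bochner_Integration.integrable_bound[OF i1 km]) (use ae bk in \<open>auto elim!: eventually_mono\<close>)
  show "integrable lborel (\<lambda>t. sgn t * k t)"
    by (rule Bochner_Integration.integrable_bound[OF i1]) (use ae bk km in \<open>auto elim!: eventually_mono simp: abs_mult\<close>)
  show "integrable lborel (\<lambda>t. \<bar>t\<bar> * k t)"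
    by (rule Bochner_Integration.integrable_bound[OF i2]) (use ae bk2 km in \<open>auto elim!: eventually_mono\<close>)
qed

lemma Im_aux: "Im z > 0 \<Longrightarrow> Im (z * (complex_of_real c / (z - complex_of_real t))) = - Im z * (c * t / ((Re z - t)^2 + (Im z)^2))"
  by (cases z) (simp add: Im_divide field_simps power2_eq_square)

lemma sgn_aux: "sgn (t::real) * k * t = \<bar>t\<bar> * k"
  by (cases "t > 0"; cases "t < 0") auto

lemma H_eq: "H_k k = (\<lambda>z. z + z * (LINT t|lborel. complex_of_real (sgn t * k t) / (z - complex_of_real t)))"
  by (rule ext) (simp add: H_k_def)

lemma H_holo:
  assumes kh: "kernel_hyps k"
  shows "H_k k holomorphic_on {z. Im z > 0}"
proof -
  have "(\<lambda>z. LINT t|lborel. complex_of_real (sgn t * k t) / (z - complex_of_real t)) holomorphic_on {z. Im z > 0}"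
    by (rule cint_holo[OF kernel_integrable(2)[OF kh]]) simp
  then show ?thesis unfolding H_eq by (intro holomorphic_intros)
qed

lemma G_holo:
  assumes "prob_space \<mu>" "sets \<mu> = sets borel"
  shows "cauchy_transform \<mu> holomorphic_on {z. Im z > 0}"
proof -
  have "integrable \<mu> (\<lambda>_. 1::real)" using finite_measure.integrable_const[OF prob_space.finite_measure[OF assms(1)]] by blast
  from cint_holo[OF this assms(2)]
  have "(\<lambda>z. LINT t|\<mu>. complex_of_real 1 / (z - complex_of_real t)) holomorphic_on {z. Im z > 0}" .
  moreover have "cauchy_transform \<mu> = (\<lambda>z. LINT t|\<mu>. complex_of_real 1 / (z - complex_of_real t))"
    by (rule ext) (simp add: cauchy_transform_def)
  ultimately show ?thesis by simp
qed

lemma ImH: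
  assumes kh: "kernel_hyps k" and z: "Im z > 0"
  shows "Im (H_k k z) = Im z * (1 - F_k k (Re z) (Im z))"
proof -
  define f where "f = (\<lambda>t. complex_of_real (sgn t * k t) / (z - complex_of_real t))"
  have fi: "integrable lborel f" unfolding f_def
    by (rule cint_integrable[OF kernel_integrable(2)[OF kh]]) (use z in auto)
  have zf: "integrable lborel (\<lambda>t. z * f t)" using fi by simp
  have "Im (z * (LINT t|lborel. f t)) = Im (LINT t|lborel. z * f t)" by simp
  also have "\<dots> = (LINT t|lborel. Im (z * f t))" using integral_Im[OF zf] by simp
  also have "\<dots> = (LINT t|lborel. - Im z * (\<bar>t\<bar> * k t / ((Re z - t)^2 + (Im z)^2)))"
  proof (intro Bochner_Integration.integral_cong refl)
    fix t
    have a: "Im (z * f t) = - Im z * ((sgn t * k t) * t / ((Re z - t)^2 + (Im z)^2))"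
      unfolding f_def by (rule Im_aux[OF z])
    have b: "(sgn t * k t) * t = \<bar>t\<bar> * k t" by (rule sgn_aux)
    from a show "Im (z * f t) = - Im z * (\<bar>t\<bar> * k t / ((Re z - t)^2 + (Im z)^2))" by (simp only: b)
  qed
  also have "\<dots> = - Im z * F_k k (Re z) (Im z)" unfolding F_k_def by (rule integral_mult_right_zero)
  finally have "Im (z * (LINT t|lborel. f t)) = - Im z * F_k k (Re z) (Im z)" .
  then show ?thesis unfolding H_k_def f_def by (simp add: algebra_simps)
qed

lemma absk_nonneg: "kernel_hyps k \<Longrightarrow> \<bar>t\<bar> * k t \<ge> 0"
  using kernel_facts(1)[of k t] by (cases "t = 0") auto

lemma F_integrable:
  assumes kh: "kernel_hyps k" and y: "y > 0"
  shows "integrable lborel (\<lambda>t. \<bar>t\<bar> * k t / ((x - t)^2 + y^2))"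
proof -
  have km: "k \<in> borel_measurable lborel" using kernel_meas[OF kh] by simp
  have i1: "integrable lborel (\<lambda>t. \<bar>t\<bar> * k t / y^2)"
    using kernel_integrable(3)[OF kh] by simp
  have m: "(\<lambda>t. \<bar>t\<bar> * k t / ((x - t)^2 + y^2)) \<in> borel_measurable lborel" using km by measurable
  have "AE t in lborel. norm (\<bar>t\<bar> * k t / ((x - t)^2 + y^2)) \<le> norm (\<bar>t\<bar> * k t / y^2)"
  proof (rule AE_I2)
    fix t
    have n: "\<bar>t\<bar> * k t \<ge> 0" by (rule absk_nonneg[OF kh])
    have "\<bar>t\<bar> * k t / ((x - t)^2 + y^2) \<le> \<bar>t\<bar> * k t / y^2"
      using n y by (intro divide_left_mono) (auto intro!: mult_pos_pos add_nonneg_pos)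
    then show "norm (\<bar>t\<bar> * k t / ((x - t)^2 + y^2)) \<le> norm (\<bar>t\<bar> * k t / y^2)"
      using n y by (simp add: add_nonneg_pos)
  qed
  then show ?thesis using Bochner_Integration.integrable_bound[OF i1 m] by blast
qed

lemma F_nonneg:
  assumes kh: "kernel_hyps k" and y: "y > 0"
  shows "F_k k x y \<ge> 0"
  unfolding F_k_def using absk_nonneg[OF kh] by (intro integral_nonneg_AE AE_I2) (auto intro!: divide_nonneg_pos add_nonneg_pos simp: y)

lemma F_bound:
  assumes kh: "kernel_hyps k" and y: "y > 0"
  shows "F_k k x y \<le> (LINT t|lborel. \<bar>t\<bar> * k t) / y^2"
proof -
  have "F_k k x y \<le> (LINT t|lborel. \<bar>t\<bar> * k t / y^2)"
    unfolding F_k_def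
  proof (rule integral_mono[OF F_integrable[OF kh y]])
    show "integrable lborel (\<lambda>t. \<bar>t\<bar> * k t / y^2)" using kernel_integrable(3)[OF kh] by simp
    fix t
    have n: "\<bar>t\<bar> * k t \<ge> 0" by (rule absk_nonneg[OF kh])
    show "\<bar>t\<bar> * k t / ((x - t)^2 + y^2) \<le> \<bar>t\<bar> * k t / y^2"
      using n y by (intro divide_left_mono) (auto intro!: mult_pos_pos add_nonneg_pos)
  qed
  then show ?thesis by simp
qed

lemma F_strict:
  assumes kh: "kernel_hyps k" and y: "0 < y1" "y1 < y2"
  shows "F_k k x y2 < F_k k x y1"
proof -
  define E where "E = (\<bar>x\<bar> + 2)^2 + y2^2"
  define c where "c = k 2 * (y2^2 - y1^2) / E^2"
  have k2: "k 2 > 0" using kernel_facts(1)[OF kh, of 2] by simp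
  have Epos: "E > 0" unfolding E_def using y by (simp add: add_pos_pos)
  have y12: "y1^2 < y2^2" using y by (simp add: power_strict_mono)
  have cpos: "c > 0" unfolding c_def using k2 y12 Epos by simp
  define f1 where "f1 = (\<lambda>t. \<bar>t\<bar> * k t / ((x - t)^2 + y1^2))"
  define f2 where "f2 = (\<lambda>t. \<bar>t\<bar> * k t / ((x - t)^2 + y2^2))"
  have i1: "integrable lborel f1" unfolding f1_def using F_integrable[OF kh, of y1] y by simp
  have i2: "integrable lborel f2" unfolding f2_def using F_integrable[OF kh, of y2] y by simp
  have low: "indicator {1..2} t * c \<le> f1 t - f2 t" for t
  proof -
    define N where "N = \<bar>t\<bar> * k t"
    define D1 where "D1 = (x - t)^2 + y1^2"
    define D2 where "D2 = (x - t)^2 + y2^2"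
    have N: "N \<ge> 0" unfolding N_def by (rule absk_nonneg[OF kh])
    have D1: "D1 > 0" unfolding D1_def using y by (simp add: add_nonneg_pos)
    have D2: "D2 > 0" unfolding D2_def using y by (simp add: add_nonneg_pos)
    have d0: "f1 t - f2 t = N / D1 - N / D2" unfolding f1_def f2_def N_def D1_def D2_def by simp
    have d1: "N / D1 - N / D2 = N * (D2 - D1) / (D1 * D2)" using D1 D2 by (simp add: field_simps)
    have d2: "D2 - D1 = y2^2 - y1^2" unfolding D1_def D2_def by simp
    have diff: "f1 t - f2 t = N * (y2^2 - y1^2) / (D1 * D2)" using d0 d1 d2 by simp
    show ?thesis
    proof (cases "t \<in> {1..2}")
      case False
      then show ?thesis unfolding diff using N D1 D2 y12 by simp
    next
      case True
      then have t: "1 \<le> t" "t \<le> 2" by auto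
      have kt: "k 2 \<le> k t" using kernel_facts(6)[OF kh, of t 2] t by simp
      have "1 * k t \<le> \<bar>t\<bar> * k t" by (rule mult_right_mono) (use t k2 kt in auto)
      then have Nge: "k 2 \<le> N" unfolding N_def using kt by linarith
      have xt: "\<bar>x - t\<bar> \<le> \<bar>x\<bar> + 2" using t by (simp add: abs_if)
      have "\<bar>x - t\<bar>^2 \<le> (\<bar>x\<bar> + 2)^2" by (rule power_mono[OF xt]) simp
      then have "(x - t)^2 \<le> (\<bar>x\<bar> + 2)^2" by simp
      then have D1E: "D1 \<le> E" and D2E: "D2 \<le> E" unfolding D1_def D2_def E_def using y12 by auto
      have "D1 * D2 \<le> E^2" using D1E D2E D1 D2 by (simp add: power2_eq_square mult_mono)
      moreover have "k 2 * (y2^2 - y1^2) \<le> N * (y2^2 - y1^2)"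
        using Nge y12 by (intro mult_right_mono) auto
      moreover have "0 \<le> N * (y2^2 - y1^2)" using N y12 by simp
      moreover have "0 < D1 * D2" using D1 D2 by simp
      ultimately have "k 2 * (y2^2 - y1^2) / E^2 \<le> N * (y2^2 - y1^2) / (D1 * D2)"
        by (intro frac_le) auto
      then show ?thesis unfolding diff c_def using True by simp
    qed
  qed
  have "(LINT t|lborel. indicator {1..2::real} t * c) \<le> (LINT t|lborel. f1 t - f2 t)"
    by (rule integral_mono) (use i1 i2 low in auto)
  moreover have "(LINT t|lborel. indicator {1..2::real} t * c) = c" by simp
  moreover have "(LINT t|lborel. f1 t - f2 t) = F_k k x y1 - F_k k x y2"
    unfolding F_k_def f1_def f2_def using i1 i2 unfolding f1_def f2_def by simp
  ultimately show ?thesis using cpos by linarith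
qed

lemma FTC_log1:
  fixes a y :: real assumes y: "y > 0"
  shows "(LBINT t:{a..a+1}. (t - a) / ((t - a)^2 + y^2)) = (ln (1 + y^2) - ln (y^2)) / 2"
proof -
  have pos: "(t - a)^2 + y^2 > 0" for t using y by (simp add: add_nonneg_pos)
  have "(LBINT t=a..a+1. (t - a) / ((t - a)^2 + y^2)) = ln ((a + 1 - a)^2 + y^2) / 2 - ln ((a - a)^2 + y^2) / 2"
  proof (rule interval_integral_FTC_finite)
    show "continuous_on {min a (a + 1)..max a (a + 1)} (\<lambda>t. (t - a) / ((t - a)\<^sup>2 + y\<^sup>2))"
      using pos y by (intro continuous_intros) (auto simp: add_nonneg_pos)
    fix t
    have "((\<lambda>t. ln ((t - a)^2 + y^2) / 2) has_real_derivative ((t - a) / ((t - a)\<^sup>2 + y\<^sup>2))) (at t)"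
      using pos[of t] by (auto intro!: derivative_eq_intros simp: field_simps power2_eq_square)
    then show "((\<lambda>t. ln ((t - a)^2 + y^2) / 2) has_vector_derivative ((t - a) / ((t - a)\<^sup>2 + y\<^sup>2))) (at t within {min a (a + 1)..max a (a + 1)})"
      by (simp add: has_real_derivative_iff_has_vector_derivative has_vector_derivative_at_within)
  qed
  then show ?thesis by (simp add: interval_integral_Icc diff_divide_distrib)
qed
lemma FTC_log2:
  fixes a y :: real assumes y: "y > 0"
  shows "(LBINT t:{a-1..a}. (a - t) / ((a - t)^2 + y^2)) = (ln (1 + y^2) - ln (y^2)) / 2"
proof -
  have pos: "(a - t)^2 + y^2 > 0" for t using y by (simp add: add_nonneg_pos)
  have "(LBINT t=a-1..a. (a - t) / ((a - t)^2 + y^2)) = - ln ((a - a)^2 + y^2) / 2 - (- ln ((a - (a - 1))^2 + y^2) / 2)"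
  proof (rule interval_integral_FTC_finite)
    show "continuous_on {min (a - 1) a..max (a - 1) a} (\<lambda>t. (a - t) / ((a - t)\<^sup>2 + y\<^sup>2))"
      using pos y by (intro continuous_intros) (auto simp: add_nonneg_pos)
    fix t
    have "((\<lambda>t. - ln ((a - t)^2 + y^2) / 2) has_real_derivative ((a - t) / ((a - t)\<^sup>2 + y\<^sup>2))) (at t)"
      using pos[of t] by (auto intro!: derivative_eq_intros simp: field_simps power2_eq_square)
    then show "((\<lambda>t. - ln ((a - t)^2 + y^2) / 2) has_vector_derivative ((a - t) / ((a - t)\<^sup>2 + y\<^sup>2))) (at t within {min (a - 1) a..max (a - 1) a})"
      by (simp add: has_real_derivative_iff_has_vector_derivative has_vector_derivative_at_within)
  qed
  then show ?thesis by (simp add: interval_integral_Icc diff_divide_distrib)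
qed

lemma F_big:
  assumes kh: "kernel_hyps k"
  shows "\<exists>y>0. F_k k x y \<ge> 1"
proof -
  have km: "k \<in> borel_measurable lborel" using kernel_meas[OF kh] by simp
  show ?thesis
  proof (cases "x \<ge> 0")
    case True
    define c where "c = k (x + 1)"
    have c: "c > 0" unfolding c_def using kernel_facts(1)[OF kh, of "x+1"] True by simp
    define L where "L = 1 / c"
    define y where "y = exp (- L)"
    have y: "y > 0" unfolding y_def by simp
    define h where "h = (\<lambda>t. (t - x) / ((t - x)^2 + y^2))"
    have pos: "(t - x)^2 + y^2 > 0" for t using y by (simp add: add_nonneg_pos)
    have ih: "integrable lborel (\<lambda>t. h t * indicator {x..x+1} t)"
      unfolding h_def by (rule borel_integrable_atLeastAtMost) (use pos y in \<open>intro continuous_intros; auto\<close>)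
    have "(LINT t|lborel. c * (h t * indicator {x..x+1} t)) \<le> F_k k x y"
      unfolding F_k_def
    proof (rule integral_mono)
      show "integrable lborel (\<lambda>t. c * (h t * indicator {x..x+1} t))" using ih by simp
      show "integrable lborel (\<lambda>t. \<bar>t\<bar> * k t / ((x - t)^2 + y^2))" by (rule F_integrable[OF kh y])
      fix t
      have D: "(x - t)^2 + y^2 = (t - x)^2 + y^2" by (simp add: power2_commute)
      show "c * (h t * indicator {x..x+1} t) \<le> \<bar>t\<bar> * k t / ((x - t)^2 + y^2)"
      proof (cases "t \<in> {x..x+1}")
        case False
        then show ?thesis using absk_nonneg[OF kh, of t] pos[of t] D by simp
      next
        case tin: True
        have num: "c * (t - x) \<le> \<bar>t\<bar> * k t"
        proof (cases "t = 0")
          case True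
          then show ?thesis using tin \<open>x \<ge> 0\<close> by simp
        next
          case False
          then have tp: "t > 0" using tin \<open>x \<ge> 0\<close> by simp
          have "c \<le> k t" unfolding c_def using kernel_facts(6)[OF kh, of t "x+1"] tp tin by simp
          moreover have "t - x \<le> \<bar>t\<bar>" using tp \<open>x \<ge> 0\<close> by simp
          ultimately have "c * (t - x) \<le> k t * \<bar>t\<bar>" using c tin by (intro mult_mono) auto
          then show ?thesis by (simp add: mult.commute)
        qed
        have "c * h t = c * (t - x) / ((t - x)^2 + y^2)" unfolding h_def by simp
        also have "\<dots> \<le> \<bar>t\<bar> * k t / ((t - x)^2 + y^2)" using num pos[of t] by (simp add: divide_right_mono)
        finally show ?thesis using tin D by simp
      qed
    qed
    moreover have "(LINT t|lborel. c * (h t * indicator {x..x+1} t)) = c * ((ln (1 + y^2) - ln (y^2)) / 2)"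
    proof -
      have "(LINT t|lborel. h t * indicator {x..x+1} t) = (LBINT t:{x..x+1}. h t)"
        by (simp add: set_lebesgue_integral_def mult.commute)
      also have "\<dots> = (ln (1 + y^2) - ln (y^2)) / 2" unfolding h_def by (rule FTC_log1[OF y])
      finally show ?thesis by simp
    qed
    moreover have "c * ((ln (1 + y^2) - ln (y^2)) / 2) \<ge> 1"
    proof -
      have "ln (y^2) = - 2 * L" unfolding y_def by (simp add: ln_realpow[symmetric] exp_of_nat_mult[symmetric] power2_eq_square) (simp add: ln_mult)
      moreover have "ln (1 + y^2) \<ge> 0" by simp
      ultimately have "(ln (1 + y^2) - ln (y^2)) / 2 \<ge> L" by simp
      then have "c * ((ln (1 + y^2) - ln (y^2)) / 2) \<ge> c * L" using c by (simp add: mult_left_mono)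
      moreover have "c * L = 1" unfolding L_def using c by simp
      ultimately show ?thesis by simp
    qed
    ultimately have "1 \<le> F_k k x y" by linarith
    then show ?thesis using y by blast
  next
    case False
    then have xn: "x < 0" by simp
    define c where "c = k (x - 1)"
    have c: "c > 0" unfolding c_def using kernel_facts(1)[OF kh, of "x-1"] xn by simp
    define L where "L = 1 / c"
    define y where "y = exp (- L)"
    have y: "y > 0" unfolding y_def by simp
    define h where "h = (\<lambda>t. (x - t) / ((x - t)^2 + y^2))"
    have pos: "(x - t)^2 + y^2 > 0" for t using y by (simp add: add_nonneg_pos)
    have ih: "integrable lborel (\<lambda>t. h t * indicator {x-1..x} t)"
      unfolding h_def by (rule borel_integrable_atLeastAtMost) (use pos y in \<open>intro continuous_intros; auto\<close>)
    have "(LINT t|lborel. c * (h t * indicator {x-1..x} t)) \<le> F_k k x y"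
      unfolding F_k_def
    proof (rule integral_mono)
      show "integrable lborel (\<lambda>t. c * (h t * indicator {x-1..x} t))" using ih by simp
      show "integrable lborel (\<lambda>t. \<bar>t\<bar> * k t / ((x - t)^2 + y^2))" by (rule F_integrable[OF kh y])
      fix t
      show "c * (h t * indicator {x-1..x} t) \<le> \<bar>t\<bar> * k t / ((x - t)^2 + y^2)"
      proof (cases "t \<in> {x-1..x}")
        case False
        then show ?thesis using absk_nonneg[OF kh, of t] pos[of t] by simp
      next
        case tin: True
        then have tn: "t < 0" using xn by simp
        have num: "c * (x - t) \<le> \<bar>t\<bar> * k t"
        proof -
          have "c \<le> k t" unfolding c_def using kernel_facts(5)[OF kh, of "x-1" t] tn tin xn by simp
          moreover have "x - t \<le> \<bar>t\<bar>" using tn xn by simp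
          moreover have "0 \<le> x - t" using tin by simp
          ultimately have "c * (x - t) \<le> k t * \<bar>t\<bar>" using c mult_mono[of c "k t" "x - t" "\<bar>t\<bar>"] by linarith
          then show ?thesis by (simp add: mult.commute)
        qed
        have "c * h t = c * (x - t) / ((x - t)^2 + y^2)" unfolding h_def by simp
        also have "\<dots> \<le> \<bar>t\<bar> * k t / ((x - t)^2 + y^2)" using num pos[of t] by (simp add: divide_right_mono)
        finally show ?thesis using tin by simp
      qed
    qed
    moreover have "(LINT t|lborel. c * (h t * indicator {x-1..x} t)) = c * ((ln (1 + y^2) - ln (y^2)) / 2)"
    proof -
      have "(LINT t|lborel. h t * indicator {x-1..x} t) = (LBINT t:{x-1..x}. h t)"
        by (simp add: set_lebesgue_integral_def mult.commute)
      also have "\<dots> = (ln (1 + y^2) - ln (y^2)) / 2" unfolding h_def by (rule FTC_log2[OF y])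
      finally show ?thesis by simp
    qed
    moreover have "c * ((ln (1 + y^2) - ln (y^2)) / 2) \<ge> 1"
    proof -
      have "ln (y^2) = - 2 * L" unfolding y_def by (simp add: ln_realpow[symmetric] exp_of_nat_mult[symmetric] power2_eq_square) (simp add: ln_mult)
      moreover have "ln (1 + y^2) \<ge> 0" by simp
      ultimately have "(ln (1 + y^2) - ln (y^2)) / 2 \<ge> L" by simp
      then have "c * ((ln (1 + y^2) - ln (y^2)) / 2) \<ge> c * L" using c by (simp add: mult_left_mono)
      moreover have "c * L = 1" unfolding L_def using c by simp
      ultimately show ?thesis by simp
    qed
    ultimately have "1 \<le> F_k k x y" by linarith
    then show ?thesis using y by blast
  qed
qed

lemma F_via_H:
  assumes kh: "kernel_hyps k" and y: "y > 0"
  shows "F_k k x y = 1 - Im (H_k k (Complex x y)) / y"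
  using ImH[OF kh, of "Complex x y"] y by (simp add: field_simps)

lemma F_cont:
  assumes kh: "kernel_hyps k" and a: "0 < a"
  shows "continuous_on {a..b} (\<lambda>y. F_k k x y)"
proof -
  have Hc: "continuous_on {z. Im z > 0} (H_k k)"
    using H_holo[OF kh] by (rule holomorphic_on_imp_continuous_on)
  have cc: "continuous_on {a..b} (\<lambda>y. Complex x y)"
    unfolding Complex_eq by (intro continuous_intros)
  have "continuous_on {a..b} (\<lambda>y. H_k k (Complex x y))"
    by (rule continuous_on_compose2[OF Hc cc]) (use a in auto)
  then have "continuous_on {a..b} (\<lambda>y. 1 - Im (H_k k (Complex x y)) / y)"
    using a by (intro continuous_intros) auto
  then show ?thesis
    by (rule continuous_on_cong[THEN iffD1, rotated 2]) (use a F_via_H[OF kh] in auto)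
qed

lemma v_prop:
  assumes kh: "kernel_hyps k"
  shows "v_k k x > 0" "F_k k x (v_k k x) = 1"
proof -
  obtain y0 where y0: "y0 > 0" "F_k k x y0 \<ge> 1" using F_big[OF kh] by blast
  define C where "C = (LINT t|lborel. \<bar>t\<bar> * k t)"
  have C: "C \<ge> 0" unfolding C_def using absk_nonneg[OF kh] by (intro integral_nonneg_AE AE_I2) auto
  define Y where "Y = sqrt C + y0 + 1"
  have sC: "sqrt C \<ge> 0" using C by simp
  have Y1: "Y > 0" unfolding Y_def using y0 sC by linarith
  have Y2: "y0 \<le> Y" unfolding Y_def using y0 sC by linarith
  note Y = Y1 Y2
  have "C \<le> Y^2"
  proof -
    have "sqrt C \<le> Y" unfolding Y_def using y0 by linarith
    then have "(sqrt C)^2 \<le> Y^2" using sC by (intro power_mono) auto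
    then show ?thesis using C by simp
  qed
  then have FY: "F_k k x Y \<le> 1" using F_bound[OF kh Y(1), of x] Y unfolding C_def[symmetric]
    by (smt (verit) divide_le_eq_1 zero_less_power)
  obtain y1 where y1: "y0 \<le> y1" "y1 \<le> Y" "F_k k x y1 = 1"
    using IVT2'[of "\<lambda>y. F_k k x y" Y 1 y0] FY y0 Y F_cont[OF kh y0(1), of Y x] by auto
  have ex: "\<exists>!y. y > 0 \<and> F_k k x y = 1"
  proof (rule ex1I[of _ y1])
    show "y1 > 0 \<and> F_k k x y1 = 1" using y1 y0 by auto
    fix y assume "y > 0 \<and> F_k k x y = 1"
    then show "y = y1" using F_strict[OF kh, of y y1 x] F_strict[OF kh, of y1 y x] y1 y0
      by (cases "y < y1"; cases "y1 < y") auto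
  qed
  from theI'[OF ex] show "v_k k x > 0" "F_k k x (v_k k x) = 1" unfolding v_k_def by auto
qed

lemma fc_alg:
  fixes z T I Q :: complex
  assumes "z \<noteq> 0" "z - T \<noteq> 0"
  shows "(z / (z - T) - 1 - T * (1 / z) * I) * Q = (Q * T) / (z - T) - (1 / z) * I * (Q * T)"
proof -
  have "z / (z - T) - 1 = T / (z - T)" using assms by (simp add: field_simps)
  then show ?thesis by (simp add: algebra_simps)
qed

lemma fc_pt:
  fixes z :: complex and t kt i :: real
  assumes z: "Im z > 0"
  shows "(1 / (1 - complex_of_real t * (1 / z)) - 1 - complex_of_real t * (1 / z) * complex_of_real i) * complex_of_real (kt / \<bar>t\<bar>)
       = complex_of_real (sgn t * kt) / (z - complex_of_real t) - (1 / z) * complex_of_real (i * (sgn t * kt))"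
proof (cases "t = 0")
  case True then show ?thesis by simp
next
  case False
  have z0: "z \<noteq> 0" using z by auto
  have zt: "z - complex_of_real t \<noteq> 0" using z by (metis Im_complex_of_real less_irrefl right_minus_eq)
  have a: "1 / (1 - complex_of_real t * (1 / z)) = z / (z - complex_of_real t)"
    using z0 zt by (simp add: field_simps)
  have s: "complex_of_real (kt / \<bar>t\<bar>) * complex_of_real t = complex_of_real (sgn t * kt)"
    using False by (cases "t > 0") (auto simp: field_simps)
  have "(z / (z - complex_of_real t) - 1 - complex_of_real t * (1 / z) * complex_of_real i) * complex_of_real (kt / \<bar>t\<bar>)
      = (complex_of_real (kt / \<bar>t\<bar>) * complex_of_real t) / (z - complex_of_real t) - (1 / z) * complex_of_real i * (complex_of_real (kt / \<bar>t\<bar>) * complex_of_real t)"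
    by (rule fc_alg[OF z0 zt])
  also have "\<dots> = complex_of_real (sgn t * kt) / (z - complex_of_real t) - (1 / z) * complex_of_real (i * (sgn t * kt))"
    unfolding s by simp
  finally show ?thesis unfolding a .
qed

lemma FC_eq:
  assumes kh: "kernel_hyps k" and z: "Im z > 0"
  shows "free_cumulant_formula k (1 / z) = (LINT t|lborel. complex_of_real (sgn t * k t) / (z - complex_of_real t))"
proof -
  define S where "S = (LINT t:{-1..1}|lborel. sgn t * k t)"
  have gi: "integrable lborel (\<lambda>t. sgn t * k t)" by (rule kernel_integrable(2)[OF kh])
  have i1: "integrable lborel (\<lambda>t. complex_of_real (sgn t * k t) / (z - complex_of_real t))"
    by (rule cint_integrable[OF gi]) (use z in auto)
  have gi2: "integrable lborel (\<lambda>t. indicator {-1..1} t * (sgn t * k t))"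
  proof -
    have "integrable lborel (\<lambda>t. indicator {-1..1::real} t *\<^sub>R (sgn t * k t))"
      by (rule integrable_mult_indicator[OF _ gi]) simp
    then show ?thesis by (simp only: real_scaleR_def)
  qed
  have i2: "integrable lborel (\<lambda>t. (1 / z) * complex_of_real (indicator {-1..1} t * (sgn t * k t)))"
  proof -
    have "integrable lborel (\<lambda>t. complex_of_real (indicator {-1..1} t * (sgn t * k t)))"
      using gi2 by (simp only: complex_of_real_integrable_eq)
    from integrable_mult_right[OF this, of "1 / z"] show ?thesis .
  qed
  have "(LINT t|lborel. (1 / (1 - complex_of_real t * (1 / z)) - 1
                         - complex_of_real t * (1 / z) * complex_of_real (indicator {-1..1} t))
                        * complex_of_real (k t / \<bar>t\<bar>))
      = (LINT t|lborel. complex_of_real (sgn t * k t) / (z - complex_of_real t) - (1 / z) * complex_of_real (indicator {-1..1} t * (sgn t * k t)))"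
    by (intro Bochner_Integration.integral_cong refl fc_pt[OF z])
  also have "\<dots> = (LINT t|lborel. complex_of_real (sgn t * k t) / (z - complex_of_real t))
               - (1 / z) * complex_of_real (LINT t|lborel. indicator {-1..1} t * (sgn t * k t))"
    by (simp only: Bochner_Integration.integral_diff[OF i1 i2] integral_mult_right_zero integral_complex_of_real)
  also have "(LINT t|lborel. indicator {-1..1} t * (sgn t * k t)) = S"
    unfolding S_def set_lebesgue_integral_def by simp
  finally show ?thesis unfolding free_cumulant_formula_def S_def[symmetric] by simp
qed

lemma GH_base:
  assumes kh: "kernel_hyps k" and nu: "is_nu_k k \<mu>"
  shows "\<exists>\<eta> M. \<eta> > 0 \<and> M > 0 \<and> (\<forall>z \<in> trunc_cone \<eta> M. cauchy_transform \<mu> (H_k k z) = 1 / z)"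
proof -
  obtain \<alpha> \<beta> \<eta> M Ginv where pos: "\<eta> > 0" "M > 0" and
    G: "\<forall>w. w \<noteq> 0 \<and> 1 / w \<in> trunc_cone \<eta> M \<longrightarrow>
           Ginv w \<in> trunc_cone \<alpha> \<beta> \<and> cauchy_transform \<mu> (Ginv w) = w \<and>
           w * Ginv w - 1 = free_cumulant_formula k w"
    using nu unfolding is_nu_k_def by blast
  have "cauchy_transform \<mu> (H_k k z) = 1 / z" if zc: "z \<in> trunc_cone \<eta> M" for z
  proof -
    have zIm: "Im z > 0" using zc pos unfolding trunc_cone_def by auto
    then have z0: "z \<noteq> 0" by auto
    have w: "1 / z \<noteq> 0 \<and> 1 / (1 / z) \<in> trunc_cone \<eta> M" using z0 zc by simp
    have GG: "Ginv (1 / z) \<in> trunc_cone \<alpha> \<beta> \<and> cauchy_transform \<mu> (Ginv (1 / z)) = 1 / z \<and>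
           (1 / z) * Ginv (1 / z) - 1 = free_cumulant_formula k (1 / z)"
      using G[rule_format, OF w] .
    then have e1: "cauchy_transform \<mu> (Ginv (1 / z)) = 1 / z"
      and e2: "(1 / z) * Ginv (1 / z) - 1 = free_cumulant_formula k (1 / z)" by auto
    define \<Phi> where "\<Phi> = (LINT t|lborel. complex_of_real (sgn t * k t) / (z - complex_of_real t))"
    have "Ginv (1 / z) = H_k k z"
    proof -
      have "(1 / z) * Ginv (1 / z) - 1 = \<Phi>" using e2 FC_eq[OF kh zIm] unfolding \<Phi>_def by simp
      then have a: "(1 / z) * Ginv (1 / z) = 1 + \<Phi>" by (simp add: diff_eq_eq)
      have "Ginv (1 / z) = z * ((1 / z) * Ginv (1 / z))" using z0 by simp
      also have "\<dots> = z * (1 + \<Phi>)" by (simp only: a)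
      also have "\<dots> = H_k k z" unfolding H_k_def \<Phi>_def by (simp add: distrib_left)
      finally show ?thesis .
    qed
    then show ?thesis using e1 by simp
  qed
  then show ?thesis using pos by blast
qed

definition Om :: "(real \<Rightarrow> real) \<Rightarrow> complex set" where
  "Om k = {z. Im z > 0 \<and> Im (H_k k z) > 0}"

lemma Om_iff:
  assumes kh: "kernel_hyps k" and z: "Im z > 0"
  shows "z \<in> Om k \<longleftrightarrow> F_k k (Re z) (Im z) < 1"
  using ImH[OF kh z] z unfolding Om_def by (simp add: zero_less_mult_iff)

lemma Om_sub: "Om k \<subseteq> {z. Im z > 0}" unfolding Om_def by auto

lemma Om_open:
  assumes kh: "kernel_hyps k"
  shows "open (Om k)"
proof -
  have Hc: "continuous_on {z. Im z > 0} (H_k k)"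
    using H_holo[OF kh] by (rule holomorphic_on_imp_continuous_on)
  have "open ({z. Im z > 0} \<inter> H_k k -` {w. Im w > 0})"
    by (rule continuous_open_preimage[OF Hc]) (auto intro: open_halfspace_Im_gt)
  moreover have "{z. Im z > 0} \<inter> H_k k -` {w. Im w > 0} = Om k" unfolding Om_def by auto
  ultimately show ?thesis by simp
qed

lemma Om_up:
  assumes kh: "kernel_hyps k" and z: "z \<in> Om k" and s: "Im z \<le> Im w" and re: "Re w = Re z"
  shows "w \<in> Om k"
proof -
  have zi: "Im z > 0" using z Om_sub by auto
  then have wi: "Im w > 0" using s by simp
  have "F_k k (Re z) (Im z) < 1" using Om_iff[OF kh zi] z by simp
  moreover have "F_k k (Re z) (Im w) \<le> F_k k (Re z) (Im z)"
    using F_strict[OF kh zi, of "Im w" "Re z"] s by (cases "Im z = Im w") auto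
  ultimately show ?thesis using Om_iff[OF kh wi] re by simp
qed

lemma Om_high:
  assumes kh: "kernel_hyps k"
  shows "\<exists>Y>0. \<forall>z. Im z > Y \<longrightarrow> z \<in> Om k"
proof -
  define C where "C = (LINT t|lborel. \<bar>t\<bar> * k t)"
  have C: "C \<ge> 0" unfolding C_def using absk_nonneg[OF kh] by (intro integral_nonneg_AE AE_I2) auto
  define Y where "Y = sqrt C + 1"
  have sC: "sqrt C \<ge> 0" using C by simp
  have Y: "Y > 0" unfolding Y_def using sC by linarith
  have "z \<in> Om k" if z: "Im z > Y" for z
  proof -
    have zi: "Im z > 0" using z Y by simp
    have "sqrt C < Im z" using z unfolding Y_def by simp
    then have "(sqrt C)^2 < (Im z)^2" using sC by (intro power_strict_mono) auto
    then have lt: "C < (Im z)^2" using C by simp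
    have "F_k k (Re z) (Im z) \<le> C / (Im z)^2" using F_bound[OF kh zi] unfolding C_def .
    also have "\<dots> < 1" using lt zi by simp
    finally show ?thesis using Om_iff[OF kh zi] by simp
  qed
  then show ?thesis using Y by blast
qed

lemma Om_connected:
  assumes kh: "kernel_hyps k"
  shows "connected (Om k)"
proof -
  obtain Y where Y: "Y > 0" "\<And>z. Im z > Y \<Longrightarrow> z \<in> Om k" using Om_high[OF kh] by blast
  define U where "U = {z. Im z > Y}"
  define A where "A = (\<lambda>z. closed_segment z (z + \<i> * of_real (Y + 1)) \<union> U) ` Om k"
  have UO: "U \<subseteq> Om k" unfolding U_def using Y by auto
  have segO: "closed_segment z (z + \<i> * of_real (Y + 1)) \<subseteq> Om k" if z: "z \<in> Om k" for z
  proof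
    fix w assume "w \<in> closed_segment z (z + \<i> * of_real (Y + 1))"
    then obtain u where u: "0 \<le> u" "u \<le> 1" "w = (1 - u) *\<^sub>R z + u *\<^sub>R (z + \<i> * of_real (Y + 1))"
      unfolding in_segment by auto
    have "w = z + \<i> * of_real (u * (Y + 1))" using u(3) by (simp add: algebra_simps scaleR_conv_of_real)
    then have "Re w = Re z" "Im w = Im z + u * (Y + 1)" by simp_all
    moreover have "u * (Y + 1) \<ge> 0" using u Y by simp
    ultimately show "w \<in> Om k" using Om_up[OF kh z, of w] by simp
  qed
  have "Om k = \<Union>A"
  proof
    show "Om k \<subseteq> \<Union>A" unfolding A_def by auto
    show "\<Union>A \<subseteq> Om k" unfolding A_def using UO segO by auto
  qed
  moreover have "connected (\<Union>A)"
  proof (rule connected_Union)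
    fix S assume "S \<in> A"
    then obtain z where z: "z \<in> Om k" and S: "S = closed_segment z (z + \<i> * of_real (Y + 1)) \<union> U"
      unfolding A_def by auto
    have zi: "Im z > 0" using z Om_sub by auto
    have "z + \<i> * of_real (Y + 1) \<in> U" unfolding U_def using zi by simp
    then have "closed_segment z (z + \<i> * of_real (Y + 1)) \<inter> U \<noteq> {}" by auto
    moreover have "connected U" unfolding U_def by (rule convex_connected[OF convex_halfspace_Im_gt])
    ultimately show "connected S" unfolding S by (intro connected_Un) auto
  next
    have "\<i> * of_real (Y + 1) \<in> \<Inter>A" unfolding A_def U_def by auto
    then show "\<Inter>A \<noteq> {}" by auto
  qed
  ultimately show ?thesis by simp
qed

lemma trunc_cone_open: "open (trunc_cone a M)"
proof -
  have "open {z::complex. \<bar>Re z\<bar> < a * Im z \<and> Im z > M}"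
    by (intro open_Collect_conj open_Collect_less continuous_intros)
  then show ?thesis unfolding trunc_cone_def .
qed

lemma GH_Om:
  assumes kh: "kernel_hyps k" and nu: "is_nu_k k \<mu>"
  shows "\<forall>z \<in> Om k. cauchy_transform \<mu> (H_k k z) = 1 / z"
    and "\<exists>z1 z2. z1 \<in> Om k \<and> z2 \<in> Om k \<and> z1 \<noteq> z2"
proof -
  obtain \<eta> M where pos: "\<eta> > 0" "M > 0" and base: "\<forall>z \<in> trunc_cone \<eta> M. cauchy_transform \<mu> (H_k k z) = 1 / z"
    using GH_base[OF kh nu] by blast
  obtain Y where Y: "Y > 0" "\<And>z. Im z > Y \<Longrightarrow> z \<in> Om k" using Om_high[OF kh] by blast
  have ps: "prob_space \<mu>" "sets \<mu> = sets borel" using nu unfolding is_nu_k_def by auto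
  define U where "U = trunc_cone \<eta> M \<inter> {z. Im z > Y}"
  have UO: "U \<subseteq> Om k" unfolding U_def using Y by auto
  have Uopen: "open U" unfolding U_def using trunc_cone_open open_halfspace_Im_gt by auto
  define \<xi> where "\<xi> = \<i> * of_real (max M Y + 1)"
  have xiU: "\<xi> \<in> U" unfolding U_def trunc_cone_def \<xi>_def using pos by auto
  have hol: "(\<lambda>z. cauchy_transform \<mu> (H_k k z) - 1 / z) holomorphic_on Om k"
  proof -
    have h1: "H_k k holomorphic_on Om k" using H_holo[OF kh] Om_sub holomorphic_on_subset by blast
    have h2: "cauchy_transform \<mu> holomorphic_on {z. Im z > 0}" by (rule G_holo[OF ps])
    have "H_k k ` Om k \<subseteq> {z. Im z > 0}" unfolding Om_def by auto
    then have "(cauchy_transform \<mu> \<circ> H_k k) holomorphic_on Om k" by (rule holomorphic_on_compose_gen[OF h1 h2])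
    moreover have "(\<lambda>z. 1 / z) holomorphic_on Om k"
    proof (intro holomorphic_intros)
      fix z assume "z \<in> Om k"
      then have "Im z > 0" using Om_sub by auto
      then show "z \<noteq> 0" by auto
    qed
    ultimately show ?thesis by (simp add: o_def holomorphic_intros)
  qed
  show "\<forall>z \<in> Om k. cauchy_transform \<mu> (H_k k z) = 1 / z"
  proof
    fix w assume w: "w \<in> Om k"
    have "cauchy_transform \<mu> (H_k k w) - 1 / w = 0"
    proof (rule analytic_continuation[OF hol Om_open[OF kh] Om_connected[OF kh] UO])
      show "\<xi> \<in> Om k" using xiU UO by auto
      show "\<xi> islimpt U" using xiU Uopen by (simp add: interior_limit_point interior_open)
      show "\<And>z. z \<in> U \<Longrightarrow> cauchy_transform \<mu> (H_k k z) - 1 / z = 0" using base unfolding U_def by auto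
    qed (rule w)
    then show "cauchy_transform \<mu> (H_k k w) = 1 / w" by simp
  qed
  have "\<i> * of_real (Y + 1) \<in> Om k" "\<i> * of_real (Y + 2) \<in> Om k" using Y by auto
  moreover have "\<i> * of_real (Y + 1) \<noteq> \<i> * of_real (Y + 2)" by simp
  ultimately show "\<exists>z1 z2. z1 \<in> Om k \<and> z2 \<in> Om k \<and> z1 \<noteq> z2" by blast
qed

lemma H_nonconst:
  assumes kh: "kernel_hyps k" and nu: "is_nu_k k \<mu>"
  shows "\<not> H_k k constant_on {z. Im z > 0}"
proof
  assume "H_k k constant_on {z. Im z > 0}"
  then obtain c where c: "\<And>z. Im z > 0 \<Longrightarrow> H_k k z = c" unfolding constant_on_def by auto
  obtain z1 z2 where z: "z1 \<in> Om k" "z2 \<in> Om k" "z1 \<noteq> z2" using GH_Om(2)[OF kh nu] by blast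
  have "1 / z1 = cauchy_transform \<mu> c" using GH_Om(1)[OF kh nu] z c Om_sub by force
  moreover have "1 / z2 = cauchy_transform \<mu> c" using GH_Om(1)[OF kh nu] z c Om_sub by force
  ultimately have "inverse z1 = inverse z2" by (simp add: inverse_eq_divide)
  then show False using z(3) by simp
qed

theorem proposition3p3:
  fixes k :: "real \<Rightarrow> real" and \<mu> :: "real measure" and x :: real
  assumes "kernel_hyps k"
    and "is_nu_k k \<mu>"
  shows "\<forall>\<delta>. 0 < \<delta> \<and> \<delta> < pi \<longrightarrow>
           (cauchy_transform \<mu> \<longlongrightarrow> 1 / Complex x (v_k k x)) (at (P_k k x) within nt_sector (P_k k x) \<delta>)"
proof (intro allI impI)
  fix \<delta> :: real assume \<delta>: "0 < \<delta> \<and> \<delta> < pi"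
  note kh = assms(1) and nu = assms(2)
  define v where "v = v_k k x"
  define \<zeta>0 where "\<zeta>0 = Complex x v"
  define P where "P = P_k k x"
  have v: "v > 0" "F_k k x v = 1" unfolding v_def using v_prop[OF kh] by auto
  have \<zeta>0i: "Im \<zeta>0 > 0" unfolding \<zeta>0_def using v by simp
  have PH: "P = H_k k \<zeta>0" unfolding P_def P_k_def \<zeta>0_def v_def by simp
  have ImP: "Im P = 0" unfolding PH using ImH[OF kh \<zeta>0i] v unfolding \<zeta>0_def by simp
  have \<zeta>0nz: "\<zeta>0 \<noteq> 0" using \<zeta>0i by auto
  have GHO: "\<forall>z \<in> Om k. cauchy_transform \<mu> (H_k k z) = 1 / z" by (rule GH_Om(1)[OF kh nu])
  have sector_Im: "Im z > 0" if zs: "z \<in> nt_sector P \<delta>" for z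
  proof -
    obtain r \<theta> where r: "z = P + complex_of_real r * cis \<theta>" "r > 0" "\<delta> < \<theta>" "\<theta> < pi - \<delta>"
      using zs unfolding nt_sector_def by blast
    have "sin \<theta> > 0" using r \<delta> by (intro sin_gt_zero) auto
    then show ?thesis using r ImP by simp
  qed
  show "(cauchy_transform \<mu> \<longlongrightarrow> 1 / Complex x (v_k k x)) (at (P_k k x) within nt_sector (P_k k x) \<delta>)"
    unfolding P_def[symmetric] v_def[symmetric] \<zeta>0_def[symmetric] Lim_within
  proof (intro allI impI)
    fix e :: real assume e: "e > 0"
    have "continuous (at \<zeta>0) (\<lambda>z. 1 / z)" using \<zeta>0nz by (intro continuous_intros) auto
    then obtain r where r: "r > 0" "\<And>z. dist z \<zeta>0 < r \<Longrightarrow> dist (1 / z) (1 / \<zeta>0) < e"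
      unfolding continuous_at_eps_delta using e by blast
    define r' where "r' = min r v"
    have r': "r' > 0" unfolding r'_def using r v by simp
    have Bsub: "ball \<zeta>0 r' \<subseteq> {z. Im z > 0}"
    proof
      fix z assume "z \<in> ball \<zeta>0 r'"
      then have "norm (\<zeta>0 - z) < r'" by (simp add: dist_norm)
      moreover have "\<bar>Im (\<zeta>0 - z)\<bar> \<le> norm (\<zeta>0 - z)" by (rule abs_Im_le_cmod)
      moreover have "Im \<zeta>0 = v" unfolding \<zeta>0_def by simp
      ultimately show "z \<in> {z. Im z > 0}" unfolding r'_def by auto
    qed
    have "open (H_k k ` ball \<zeta>0 r')"
      by (rule open_mapping_thm[OF H_holo[OF kh] open_halfspace_Im_gt
            convex_connected[OF convex_halfspace_Im_gt] open_ball Bsub H_nonconst[OF kh nu]])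
    moreover have "P \<in> H_k k ` ball \<zeta>0 r'" unfolding PH using r' by simp
    ultimately obtain d where d: "d > 0" "ball P d \<subseteq> H_k k ` ball \<zeta>0 r'"
      unfolding open_contains_ball by blast
    show "\<exists>d>0. \<forall>z\<in>nt_sector P \<delta>. 0 < dist z P \<and> dist z P < d \<longrightarrow> dist (cauchy_transform \<mu> z) (1 / \<zeta>0) < e"
    proof (intro exI[of _ d] conjI ballI impI)
      show "d > 0" by (rule d(1))
      fix z assume zs: "z \<in> nt_sector P \<delta>" and zd: "0 < dist z P \<and> dist z P < d"
      have "z \<in> ball P d" using zd by (simp add: dist_commute)
      then obtain \<zeta> where \<zeta>: "\<zeta> \<in> ball \<zeta>0 r'" "z = H_k k \<zeta>" using d by blast
      have \<zeta>i: "Im \<zeta> > 0" using \<zeta>(1) Bsub by auto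
      have "\<zeta> \<in> Om k" unfolding Om_def using \<zeta>i sector_Im[OF zs] \<zeta>(2) by simp
      then have "cauchy_transform \<mu> z = 1 / \<zeta>" using GHO \<zeta>(2) by simp
      moreover have "dist \<zeta> \<zeta>0 < r" using \<zeta>(1) unfolding r'_def by (simp add: dist_commute)
      ultimately show "dist (cauchy_transform \<mu> z) (1 / \<zeta>0) < e" using r(2) by simp
    qed
  qed
qed

end
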